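(* Let $\alpha \in [0,1)$, let $T$ be any monotone total order on $\Omega$, let $\mathbf{x} \in \Omega$, and let $k \in \{0,\dots,m-2\}$ be such that $\mathbf{S}_k \le_T \mathbf{x} \le_T \mathbf{S}_{k+1}$, where $\mathbf{S}_j = (S_j,\dots,S_j)$ denotes a homogeneous sample. Then $$B_{T_h}^*(\mathbf{S}_k) \le B_T^*(\mathbf{x}) \le B_{T_\ell}^*(\mathbf{S}_{k+1}).$$
   Context: Fix integers $m \ge 2$, $n \ge 1$ and reals $S_{\min} < S_{\max}$; $S = \{S_0,\dots,S_{m-1}\}$ with $S_k = S_{\min} + k\frac{S_{\max}-S_{\min}}{m-1}$. $\mathcal{F}$ is the set of probability distributions on $S$, identified with the probability simplex in $\mathbb{R}^m$ with the Euclidean topology; $E[F]$ is the mean. $\Omega$ is the set of samples of size $n$ from $S$, identified with their sorted versions $x_{(1)} \le \dots \le x_{(n)}$. $P_F[\Omega']$ is the probability that the sorted sample of $n$ i.i.d. draws from $F$ lies in $\Omega' \subseteq \Omega$; $\mathcal{G}(\Omega',\alpha) = \{F : P_F[\Omega'] > \alpha\}$ and $\mathcal{F}(\Omega',\alpha)$ is its closure. For a total order $T$ on $\Omega$, $\Omega(\mathbf{x},T) = \{\mathbf{y} : \mathbf{x} \le_T \mathbf{y}\}$ and the pessimal (conditionally optimal) bound is $B_T^*(\mathbf{x}) = \min\{E[F] : F \in \mathcal{F}(\Omega(\mathbf{x},T),\alpha)\}$ (standing assumption: the sets involved are nonempty). $\mathbf{x} \le \mathbf{y}$ means $x_{(j)}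 \le y_{(j)}$ for all $j$; $T$ is monotone if $\mathbf{x} \le \mathbf{y}$ implies $\mathbf{x} \le_T \mathbf{y}$. $T_\ell$ (low lexicographic): $\mathbf{x} \le_{T_\ell} \mathbf{y}$ iff $\mathbf{x}=\mathbf{y}$ or at the smallest index $j$ with $x_{(j)} \ne y_{(j)}$ we have $x_{(j)} < y_{(j)}$. $T_h$ (high lexicographic): same with the largest such index. *)

theory Defs
  imports "HOL-Analysis.Analysis"
begin

definition Spt :: "nat \<Rightarrow> real \<Rightarrow> real \<Rightarrow> nat \<Rightarrow> real" where
  "Spt m Smin Smax k = Smin + real k * (Smax - Smin) / (real m - 1)"

definition Dists :: "nat \<Rightarrow> (nat \<Rightarrow> real) set" where
  "Dists m = {F. (\<forall>k<m. 0 \<le> F k) \<and> (\<forall>k\<ge>m. F k = 0) \<and> (\<Sum>k<m. F k) = 1}"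

definition mean :: "nat \<Rightarrow> real \<Rightarrow> real \<Rightarrow> (nat \<Rightarrow> real) \<Rightarrow> real" where
  "mean m Smin Smax F = (\<Sum>k<m. F k * Spt m Smin Smax k)"

definition Omega :: "nat \<Rightarrow> nat \<Rightarrow> real \<Rightarrow> real \<Rightarrow> real list set" where
  "Omega m n Smin Smax = {xs. length xs = n \<and> sorted xs \<and> set xs \<subseteq> Spt m Smin Smax ` {..<m}}"

text \<open>P_F[Omega']: probability that the sorted sample of n iid draws from F lies in Omega'.
  Sum over all ordered index sequences of length n.\<close>
definition prob_sample :: "nat \<Rightarrow> nat \<Rightarrow> real \<Rightarrow> real \<Rightarrow> (nat \<Rightarrow> real) \<Rightarrow> real list set \<Rightarrow> real" where
  "prob_sample m n Smin Smax F A =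
     (\<Sum>is \<in> {is. length is = n \<and> set is \<subseteq> {..<m}}.
        (\<Prod>i\<leftarrow>is. F i) * (if sort (map (Spt m Smin Smax) is) \<in> A then 1 else 0))"

definition Gset :: "nat \<Rightarrow> nat \<Rightarrow> real \<Rightarrow> real \<Rightarrow> real list set \<Rightarrow> real \<Rightarrow> (nat \<Rightarrow> real) set" where
  "Gset m n Smin Smax A \<alpha> = {F \<in> Dists m. prob_sample m n Smin Smax F A > \<alpha>}"

text \<open>F(Omega', alpha): closure of G in the Euclidean topology of R^m (the simplex is closed,
  so closure within the simplex equals closure in R^m).\<close>
definition Fset :: "nat \<Rightarrow> nat \<Rightarrow> real \<Rightarrow> real \<Rightarrow> real list set \<Rightarrow> real \<Rightarrow> (nat \<Rightarrow> real) set" where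
  "Fset m n Smin Smax A \<alpha> = {F \<in> Dists m. \<forall>e>0. \<exists>G \<in> Gset m n Smin Smax A \<alpha>.
       sqrt (\<Sum>k<m. (F k - G k)^2) < e}"

definition upset :: "real list set \<Rightarrow> (real list \<times> real list) set \<Rightarrow> real list \<Rightarrow> real list set" where
  "upset Om T x = {y \<in> Om. (x, y) \<in> T}"

definition Bstar :: "nat \<Rightarrow> nat \<Rightarrow> real \<Rightarrow> real \<Rightarrow> real \<Rightarrow> (real list \<times> real list) set \<Rightarrow> real list \<Rightarrow> real" where
  "Bstar m n Smin Smax \<alpha> T x =
     Inf (mean m Smin Smax ` Fset m n Smin Smax (upset (Omega m n Smin Smax) T x) \<alpha>)"

definition sample_le :: "real list \<Rightarrow> real list \<Rightarrow> bool" where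
  "sample_le xs ys \<longleftrightarrow> length xs = length ys \<and> (\<forall>j<length xs. xs ! j \<le> ys ! j)"

definition monotone_order :: "real list set \<Rightarrow> (real list \<times> real list) set \<Rightarrow> bool" where
  "monotone_order Om T \<longleftrightarrow> (\<forall>x\<in>Om. \<forall>y\<in>Om. sample_le x y \<longrightarrow> (x, y) \<in> T)"

definition Tlow :: "real list set \<Rightarrow> (real list \<times> real list) set" where
  "Tlow Om = {(x, y). x \<in> Om \<and> y \<in> Om \<and> (x = y \<or>
      (\<exists>j<length x. (\<forall>i<j. x ! i = y ! i) \<and> x ! j < y ! j))}"

definition Thigh :: "real list set \<Rightarrow> (real list \<times> real list) set" where
  "Thigh Om = {(x, y). x \<in> Om \<and> y \<in> Om \<and> (x = y \<or>
      (\<exists>j<length x. (\<forall>i. j < i \<and> i < length x \<longrightarrow> x ! i = y ! i) \<and> x ! j < y ! j))}"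

definition homog :: "nat \<Rightarrow> nat \<Rightarrow> real \<Rightarrow> real \<Rightarrow> nat \<Rightarrow> real list" where
  "homog m n Smin Smax k = replicate n (Spt m Smin Smax k)"

end

theory Submission
  imports Defs
begin

lemma prob_mono:
  assumes "F \<in> Dists m" "A \<subseteq> B"
  shows "prob_sample m n Smin Smax F A \<le> prob_sample m n Smin Smax F B"
  unfolding prob_sample_def
proof (rule sum_mono)
  fix xs assume "xs \<in> {is. length is = n \<and> set is \<subseteq> {..<m}}"
  hence "\<forall>i\<in>set xs. 0 \<le> F i" using assms(1) unfolding Dists_def by auto
  hence "0 \<le> (\<Prod>i\<leftarrow>xs. F i)" by (intro prod_list_nonneg) auto
  thus "(\<Prod>i\<leftarrow>xs. F i) * (if sort (map (Spt m Smin Smax) xs) \<in> A then 1 else 0)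
      \<le> (\<Prod>i\<leftarrow>xs. F i) * (if sort (map (Spt m Smin Smax) xs) \<in> B then 1 else 0)"
    using assms(2) by auto
qed

lemma Fset_mono:
  assumes "A \<subseteq> B"
  shows "Fset m n Smin Smax A \<alpha> \<subseteq> Fset m n Smin Smax B \<alpha>"
proof -
  have "Gset m n Smin Smax A \<alpha> \<subseteq> Gset m n Smin Smax B \<alpha>"
    unfolding Gset_def using prob_mono[OF _ assms] by (auto intro: less_le_trans)
  thus ?thesis unfolding Fset_def by blast
qed

lemma mean_lb:
  assumes "F \<in> Dists m" "2 \<le> m" "Smin < Smax"
  shows "Smin \<le> mean m Smin Smax F"
proof -
  have "Smin = (\<Sum>k<m. F k * Smin)" using assms(1) unfolding Dists_def
    by (simp add: sum_distrib_right[symmetric])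
  also have "\<dots> \<le> (\<Sum>k<m. F k * Spt m Smin Smax k)"
  proof (rule sum_mono)
    fix k assume "k \<in> {..<m}"
    have "0 \<le> F k" using assms(1) \<open>k \<in> {..<m}\<close> unfolding Dists_def by auto
    moreover have "Smin \<le> Spt m Smin Smax k" unfolding Spt_def
      using assms(2,3) by (auto intro!: divide_nonneg_pos)
    ultimately show "F k * Smin \<le> F k * Spt m Smin Smax k" by (rule mult_left_mono[rotated])
  qed
  finally show ?thesis unfolding mean_def .
qed

lemma point_mass:
  assumes "j < m" "homog m n Smin Smax j \<in> A" "\<alpha> < 1"
  shows "(\<lambda>i. if i = j then 1 else 0) \<in> Fset m n Smin Smax A \<alpha>"
proof -
  define F :: "nat \<Rightarrow> real" where "F = (\<lambda>i. if i = j then 1 else 0)"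
  have D: "F \<in> Dists m" unfolding Dists_def F_def using assms(1)
    by (auto simp: sum.delta)
  define L where "L = {is. length is = n \<and> set is \<subseteq> {..<m}}"
  have fin: "finite L" unfolding L_def using finite_lists_length_eq[of "{..<m}" n]
    by (simp add: conj_commute)
  have r: "replicate n j \<in> L" unfolding L_def using assms(1) by auto
  have z: "(\<Prod>i\<leftarrow>xs. F i) * (if sort (map (Spt m Smin Smax) xs) \<in> A then 1 else 0) = 0"
    if "xs \<in> L - {replicate n j}" for xs
  proof -
    from that have "xs \<noteq> replicate n j" "length xs = n" unfolding L_def by auto
    hence "\<exists>i\<in>set xs. i \<noteq> j" by (metis replicate_eqI)
    hence "0 \<in> set (map F xs)" unfolding F_def by force
    hence "(\<Prod>i\<leftarrow>xs. F i) = 0" by (simp add: prod_list_zero_iff)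
    thus ?thesis by simp
  qed
  have "prob_sample m n Smin Smax F A =
     (\<Sum>xs\<in>L. (\<Prod>i\<leftarrow>xs. F i) * (if sort (map (Spt m Smin Smax) xs) \<in> A then 1 else 0))"
    unfolding prob_sample_def L_def ..
  also have "\<dots> = (\<Prod>i\<leftarrow>replicate n j. F i) *
       (if sort (map (Spt m Smin Smax) (replicate n j)) \<in> A then 1 else 0)"
  proof -
    have "(\<Sum>xs\<in>L - {replicate n j}. (\<Prod>i\<leftarrow>xs. F i) * (if sort (map (Spt m Smin Smax) xs) \<in> A then 1 else 0)) = 0"
      using z by (intro sum.neutral) blast
    thus ?thesis by (subst sum.remove[OF fin r]) simp
  qed
  also have "\<dots> = 1" using assms(2) unfolding F_def homog_def
    by (simp add: prod_list_replicate)
  finally have "F \<in> Gset m n Smin Smax A \<alpha>" unfolding Gset_def using D assms(3) by simp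
  hence "F \<in> Fset m n Smin Smax A \<alpha>" unfolding Fset_def using D
    by (auto intro!: bexI[of _ F])
  thus ?thesis unfolding F_def .
qed

theorem theorem4:
  fixes m n :: nat and Smin Smax \<alpha> :: real
    and T :: "(real list \<times> real list) set" and x :: "real list" and k :: nat
  assumes "2 \<le> m" and "1 \<le> n" and "Smin < Smax"
    and "0 \<le> \<alpha>" and "\<alpha> < 1"
    and "T \<subseteq> Omega m n Smin Smax \<times> Omega m n Smin Smax"
    and "linear_order_on (Omega m n Smin Smax) T"
    and "monotone_order (Omega m n Smin Smax) T"
    and "x \<in> Omega m n Smin Smax"
    and "k \<le> m - 2"
    and "(homog m n Smin Smax k, x) \<in> T"
    and "(x, homog m n Smin Smax (k + 1)) \<in> T"
  shows "Bstar m n Smin Smax \<alpha> (Thigh (Omega m n Smin Smax)) (homog m n Smin Smax k)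
           \<le> Bstar m n Smin Smax \<alpha> T x
       \<and> Bstar m n Smin Smax \<alpha> T x
           \<le> Bstar m n Smin Smax \<alpha> (Tlow (Omega m n Smin Smax)) (homog m n Smin Smax (k + 1))"
proof -
  define Om where "Om = Omega m n Smin Smax"
  define a where "a = homog m n Smin Smax k"
  define b where "b = homog m n Smin Smax (k+1)"
  define sa where "sa = Spt m Smin Smax k"
  define sb where "sb = Spt m Smin Smax (k+1)"
  have km: "k < m" "k + 1 < m" using assms(1,10) by auto
  have aO: "a \<in> Om" unfolding a_def Om_def Omega_def homog_def using km by auto
  have bO: "b \<in> Om" unfolding b_def Om_def Omega_def homog_def using km by auto
  have tr: "trans T" and an: "antisym T" using assms(7)
    unfolding linear_order_on_def partial_order_on_def preorder_on_def by auto
  have mono: "\<And>u v. u \<in> Om \<Longrightarrow> v \<in> Om \<Longrightarrow> sample_le u v \<Longrightarrow> (u, v) \<in> T"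
    using assms(8) unfolding monotone_order_def Om_def by auto
  have omS: "\<And>y. y \<in> Om \<Longrightarrow> length y = n \<and> sorted y" unfolding Om_def Omega_def by auto
  have xO: "x \<in> Om" using assms(9) Om_def by simp
  have inc1: "upset Om (Tlow Om) b \<subseteq> upset Om T x"
  proof
    fix y assume "y \<in> upset Om (Tlow Om) b"
    hence yO: "y \<in> Om" and yt: "(b, y) \<in> Tlow Om" unfolding upset_def by auto
    have ly: "length y = n" and sy: "sorted y" using omS[OF yO] by auto
    have "sample_le b y"
    proof (cases "y = b")
      case True thus ?thesis unfolding sample_le_def by simp
    next
      case False
      then obtain j where j: "j < length b" "\<forall>i<j. b ! i = y ! i" "b ! j < y ! j"
        using yt unfolding Tlow_def by auto
      have lb: "length b = n" and bi: "\<And>i. i < n \<Longrightarrow> b ! i = sb"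
        unfolding b_def homog_def sb_def by auto
      have y0: "sb \<le> y ! 0"
      proof (cases "j = 0")
        case True thus ?thesis using j bi lb by fastforce
      next
        case False thus ?thesis using j bi lb by fastforce
      qed
      have "\<forall>i<n. b ! i \<le> y ! i"
      proof (intro allI impI)
        fix i assume "i < n"
        have "y ! 0 \<le> y ! i" using sorted_nth_mono[OF sy, of 0 i] \<open>i < n\<close> ly by simp
        thus "b ! i \<le> y ! i" using bi[OF \<open>i<n\<close>] y0 by simp
      qed
      thus ?thesis unfolding sample_le_def using lb ly by simp
    qed
    hence "(b, y) \<in> T" using mono bO yO by blast
    hence "(x, y) \<in> T" using tr assms(12) unfolding b_def by (meson transD)
    thus "y \<in> upset Om T x" unfolding upset_def using yO by simp
  qed
  have inc2: "upset Om T x \<subseteq> upset Om (Thigh Om) a"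
  proof
    fix y assume "y \<in> upset Om T x"
    hence yO: "y \<in> Om" and xy: "(x, y) \<in> T" unfolding upset_def by auto
    have ly: "length y = n" and sy: "sorted y" using omS[OF yO] by auto
    have la: "length a = n" and ai: "\<And>i. i < n \<Longrightarrow> a ! i = sa"
      unfolding a_def homog_def sa_def by auto
    have ay: "(a, y) \<in> T" using tr assms(11) xy unfolding a_def by (meson transD)
    have "(a, y) \<in> Thigh Om"
    proof (cases "sa < y ! (n - 1)")
      case True
      have "\<exists>j<length a. (\<forall>i. j < i \<and> i < length a \<longrightarrow> a ! i = y ! i) \<and> a ! j < y ! j"
        using True la ai assms(2) by (intro exI[of _ "n - 1"]) auto
      thus ?thesis unfolding Thigh_def using aO yO by auto
    next
      case False
      have "\<forall>i<n. y ! i \<le> a ! i"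
      proof (intro allI impI)
        fix i assume "i < n"
        have "y ! i \<le> y ! (n - 1)" using sorted_nth_mono[OF sy, of i "n - 1"] \<open>i < n\<close> ly by simp
        thus "y ! i \<le> a ! i" using ai[OF \<open>i<n\<close>] False by simp
      qed
      hence "sample_le y a" unfolding sample_le_def using la ly by simp
      hence "(y, a) \<in> T" using mono aO yO by blast
      hence "y = a" using ay an by (meson antisymD)
      thus ?thesis unfolding Thigh_def using aO by auto
    qed
    thus "y \<in> upset Om (Thigh Om) a" unfolding upset_def using yO by simp
  qed
  have bup: "b \<in> upset Om (Tlow Om) b" unfolding upset_def Tlow_def using bO by auto
  have ne: "Fset m n Smin Smax (upset Om (Tlow Om) b) \<alpha> \<noteq> {}"
    using point_mass[OF km(2) _ assms(5), where A="upset Om (Tlow Om) b"] bup unfolding b_def by auto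
  have ne2: "Fset m n Smin Smax (upset Om T x) \<alpha> \<noteq> {}"
    using ne Fset_mono[OF inc1] by blast
  have bdd: "\<And>A. bdd_below (mean m Smin Smax ` Fset m n Smin Smax A \<alpha>)"
    using mean_lb[OF _ assms(1,3)] unfolding Fset_def bdd_below_def by blast
  have 1: "Bstar m n Smin Smax \<alpha> (Thigh Om) a \<le> Bstar m n Smin Smax \<alpha> T x"
    unfolding Bstar_def Om_def[symmetric]
    proof (rule cInf_superset_mono)
    show "mean m Smin Smax ` Fset m n Smin Smax (upset Om T x) \<alpha> \<noteq> {}" using ne2 by blast
    show "bdd_below (mean m Smin Smax ` Fset m n Smin Smax (upset Om (Thigh Om) a) \<alpha>)" by (rule bdd)
    show "mean m Smin Smax ` Fset m n Smin Smax (upset Om T x) \<alpha>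
       \<subseteq> mean m Smin Smax ` Fset m n Smin Smax (upset Om (Thigh Om) a) \<alpha>"
      using Fset_mono[OF inc2, of m n Smin Smax \<alpha>] by (rule image_mono)
  qed
  have 2: "Bstar m n Smin Smax \<alpha> T x \<le> Bstar m n Smin Smax \<alpha> (Tlow Om) b"
    unfolding Bstar_def Om_def[symmetric]
    proof (rule cInf_superset_mono)
    show "mean m Smin Smax ` Fset m n Smin Smax (upset Om (Tlow Om) b) \<alpha> \<noteq> {}" using ne by blast
    show "bdd_below (mean m Smin Smax ` Fset m n Smin Smax (upset Om T x) \<alpha>)" by (rule bdd)
    show "mean m Smin Smax ` Fset m n Smin Smax (upset Om (Tlow Om) b) \<alpha>
       \<subseteq> mean m Smin Smax ` Fset m n Smin Smax (upset Om T x) \<alpha>"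
      using Fset_mono[OF inc1, of m n Smin Smax \<alpha>] by (rule image_mono)
  qed
  show ?thesis using 1 2 unfolding Om_def a_def b_def by blast
qed

end
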